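(* Let $D>0$ be a square-free integer. Let $z_1=\frac{a_1+b_1\sqrt{-D}}{c_1}$ and $z_2=\frac{a_2+b_2\sqrt{-D}}{c_2}$ be elements of $G_D(\mathbb{Q})$ with $a_i,b_i\in\mathbb{Z}$, $c_i$ positive integers, and $\gcd(a_1,b_1)=\gcd(a_2,b_2)=\gcd(c_1,c_2)=1$. Then $(a_1a_2-Db_1b_2)^2+D(a_1b_2+a_2b_1)^2=(c_1c_2)^2$, and $a_1a_2-Db_1b_2$ and $a_1b_2+a_2b_1$ are coprime; i.e. $(a_1a_2-Db_1b_2,\ a_1b_2+a_2b_1,\ c_1c_2)$ is a normalized solution (up to signs of the first two entries).
   Context: $G_D(\mathbb{Q}):=\{a+b\sqrt{-D}\in\mathbb{Q}[\sqrt{-D}]: a^2+Db^2=1\}$. A normalized solution of $x^2+Dy^2=z^2$ is a triple $(a,b,c)$ of natural numbers with $a^2+Db^2=c^2$ and $\gcd(a,b,c)=1$. *)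

theory Defs
  imports "HOL-Computational_Algebra.Computational_Algebra"
begin

text \<open>Elements x + y sqrt(-D) of Q[sqrt(-D)] are represented by the pair (x, y) of rationals.
  G_D(Q) is the set of norm-one elements: x^2 + D y^2 = 1.\<close>
definition G_D :: "int \<Rightarrow> (rat \<times> rat) set" where
  "G_D D = {(x, y). x^2 + of_int D * y^2 = 1}"

definition normalized_solution :: "int \<Rightarrow> nat \<Rightarrow> nat \<Rightarrow> nat \<Rightarrow> bool" where
  "normalized_solution D a b c \<longleftrightarrow>
     int a ^ 2 + D * int b ^ 2 = int c ^ 2 \<and> gcd (gcd a b) c = 1"

end

theory Submission
  imports Defs
begin

lemma norm_eq:
  fixes D a b c :: int
  assumes "c > 0" and "(of_int a / of_int c, of_int b / of_int c) \<in> G_D D"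
  shows "a^2 + D*b^2 = c^2"
proof -
  have h: "(of_int a / of_int c)^2 + of_int D * (of_int b / of_int c)^2 = (1::rat)"
    using assms(2) by (simp add: G_D_def)
  have cz: "(of_int c::rat) \<noteq> 0" using assms(1) by simp
  from h have "(of_int a)^2 + of_int D * (of_int b)^2 = (of_int c ^ 2::rat)"
    using cz by (simp add: field_simps power2_eq_square)
  hence "(of_int (a^2 + D*b^2)::rat) = of_int (c^2)" by simp
  thus ?thesis by (simp only: of_int_eq_iff)
qed

theorem lemma3p7:
  fixes D a1 b1 c1 a2 b2 c2 :: int
  assumes "D > 0" and "squarefree D"
    and "c1 > 0" and "c2 > 0"
    and "(of_int a1 / of_int c1, of_int b1 / of_int c1) \<in> G_D D"
    and "(of_int a2 / of_int c2, of_int b2 / of_int c2) \<in> G_D D"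
    and "gcd a1 b1 = 1" and "gcd a2 b2 = 1" and "gcd c1 c2 = 1"
  shows "(a1*a2 - D*b1*b2)^2 + D*(a1*b2 + a2*b1)^2 = (c1*c2)^2
         \<and> coprime (a1*a2 - D*b1*b2) (a1*b2 + a2*b1)
         \<and> normalized_solution D (nat \<bar>a1*a2 - D*b1*b2\<bar>) (nat \<bar>a1*b2 + a2*b1\<bar>) (nat (c1*c2))"
proof -
  define A where "A = a1*a2 - D*b1*b2"
  define B where "B = a1*b2 + a2*b1"
  have n1: "a1^2 + D*b1^2 = c1^2" using norm_eq assms(3,5) by blast
  have n2: "a2^2 + D*b2^2 = c2^2" using norm_eq assms(4,6) by blast
  have e1: "A^2 + D*B^2 = (c1*c2)^2"
  proof -
    have "A^2 + D*B^2 = (a1^2 + D*b1^2)*(a2^2 + D*b2^2)"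
      unfolding A_def B_def by (simp add: algebra_simps power2_eq_square)
    thus ?thesis using n1 n2 by (simp add: power_mult_distrib)
  qed
  have i1: "A*a2 + D*B*b2 = a1*c2^2"
    unfolding A_def B_def n2[symmetric] by (simp add: algebra_simps power2_eq_square)
  have i2: "B*a2 - A*b2 = b1*c2^2"
    unfolding A_def B_def n2[symmetric] by (simp add: algebra_simps power2_eq_square)
  have i3: "A*a1 + D*B*b1 = a2*c1^2"
    unfolding A_def B_def n1[symmetric] by (simp add: algebra_simps power2_eq_square)
  have i4: "B*a1 - A*b1 = b2*c1^2"
    unfolding A_def B_def n1[symmetric] by (simp add: algebra_simps power2_eq_square)
  have cop: "coprime A B"
  proof (rule coprimeI)
    fix d assume dA: "d dvd A" and dB: "d dvd B"
    have "d dvd a1*c2^2" using i1 dA dB by (metis dvd_add dvd_mult dvd_mult2)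
    moreover have "d dvd b1*c2^2" using i2 dA dB by (metis dvd_diff dvd_mult2)
    ultimately have "d dvd gcd (a1*c2^2) (b1*c2^2)" by simp
    hence d1: "d dvd c2^2" using assms(7) by (simp add: gcd_mult_right abs_mult gcd.commute)
    have "d dvd a2*c1^2" using i3 dA dB by (metis dvd_add dvd_mult dvd_mult2)
    moreover have "d dvd b2*c1^2" using i4 dA dB by (metis dvd_diff dvd_mult2)
    ultimately have "d dvd gcd (a2*c1^2) (b2*c1^2)" by simp
    hence d2: "d dvd c1^2" using assms(8) by (simp add: gcd_mult_right abs_mult gcd.commute)
    have "coprime (c1^2) (c2^2)" using assms(9) by (simp add: coprime_iff_gcd_eq_1[symmetric])
    thus "is_unit d" using d1 d2 by (meson coprime_common_divisor)
  qed
  have ns: "normalized_solution D (nat \<bar>A\<bar>) (nat \<bar>B\<bar>) (nat (c1*c2))"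
  proof -
    have "int (nat \<bar>A\<bar>) ^ 2 = A^2" by simp
    moreover have "int (nat \<bar>B\<bar>) ^ 2 = B^2" by simp
    moreover have "int (nat (c1*c2)) = c1*c2" using assms(3,4) by simp
    moreover have "gcd (nat \<bar>A\<bar>) (nat \<bar>B\<bar>) = 1"
    proof -
      have "gcd A B = 1" using cop by simp
      moreover have "gcd A B = int (gcd (nat \<bar>A\<bar>) (nat \<bar>B\<bar>))" by (rule gcd_int_def)
      ultimately show ?thesis by linarith
    qed
    ultimately show ?thesis unfolding normalized_solution_def using e1 by simp
  qed
  show ?thesis using e1 cop ns unfolding A_def B_def by simp
qed

end
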